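(* Let $d\ge 3$ be a prime, $\omega=e^{2\pi i/d}$, and $-\frac{1}{d^2-1}\le p\le 1$. Let $\rho_{AB}=p\,|\Psi^+\rangle\langle\Psi^+|+(1-p)\frac{\mathbb{I}}{d^2}$ on $\mathbb{C}^d\otimes\mathbb{C}^d$, where $|\Psi^+\rangle=\frac{1}{\sqrt d}\sum_{i=0}^{d-1}|ii\rangle$. Let $M_1,\dots,M_{d+1}$ be the $d+1$ mutually unbiased bases consisting of the computational basis $\{|0\rangle,\dots,|d-1\rangle\}$, the Fourier basis $\{\mathcal{F}|l\rangle\}_{l=0}^{d-1}$, and the bases $\{D^k\mathcal{F}|l\rangle\}_{l=0}^{d-1}$ for $k=1,\dots,d-1$. Then $$I(A:B)\ \ge\ \sum_{i=1}^{d+1} I(M_i^A:M_i^B)\ \ge\ \min_{\mathcal{S}\subseteq\{1,\dots,d+1\},\,|\mathcal{S}|=d}\ \sum_{i\in\mathcal{S}} I(M_i^A:M_i^B).$$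
   Context: Logarithms are base 2, $0\log0=0$. $\mathcal{F}=\frac{1}{\sqrt d}\sum_{x,y=0}^{d-1}\omega^{xy}|x\rangle\langle y|$, $D=\mathrm{diag}(\omega^{j^2})_{j=0}^{d-1}$. $I(A:B)=H(A)+H(B)-H(AB)$ with von Neumann entropies. For a basis $\{|m_j\rangle\}$, $M^A,M^B$ are the outcomes when both parties measure their subsystem in that basis, with joint distribution $p(j,k)=\langle m_j\otimes m_k|\rho_{AB}|m_j\otimes m_k\rangle$, and $I(M^A:M^B)$ is the classical (Shannon) mutual information of this distribution. *)

theory Defs
  imports "Jordan_Normal_Form.Char_Poly" "HOL-Computational_Algebra.Fundamental_Theorem_Algebra"
begin

text \<open>Conventions. Operators on C^d (x) C^d are complex (d*d)x(d*d) matrices;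
  the basis vector |a>|b> (0 <= a,b < d) has index a*d+b.
  Logarithms are base 2 and 0 log 0 = 0.\<close>

definition ent_term :: "real \<Rightarrow> real" where
  "ent_term x = (if x = 0 then 0 else - x * log 2 x)"

text \<open>For the Hermitian matrices considered all eigenvalues are real.\<close>
definition vn_entropy :: "complex mat \<Rightarrow> real" where
  "vn_entropy \<rho> = (\<Sum>e\<in># proots (char_poly \<rho>). ent_term (Re e))"

definition ptrace_B :: "nat \<Rightarrow> complex mat \<Rightarrow> complex mat" where
  "ptrace_B d \<rho> = mat d d (\<lambda>(a, a'). \<Sum>b<d. \<rho> $$ (a*d+b, a'*d+b))"

definition ptrace_A :: "nat \<Rightarrow> complex mat \<Rightarrow> complex mat" where
  "ptrace_A d \<rho> = mat d d (\<lambda>(b, b'). \<Sum>a<d. \<rho> $$ (a*d+b, a*d+b'))"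

definition quantum_MI :: "nat \<Rightarrow> complex mat \<Rightarrow> real" where
  "quantum_MI d \<rho> = vn_entropy (ptrace_B d \<rho>) + vn_entropy (ptrace_A d \<rho>) - vn_entropy \<rho>"

definition iso_state :: "nat \<Rightarrow> real \<Rightarrow> complex mat" where
  "iso_state d p = mat (d*d) (d*d) (\<lambda>(r, c).
     complex_of_real p * (if r div d = r mod d \<and> c div d = c mod d then 1 / of_nat d else 0)
     + complex_of_real (1 - p) * (if r = c then 1 / of_nat (d^2) else 0))"

definition omega :: "nat \<Rightarrow> complex" where
  "omega d = cis (2 * pi / real d)"

text \<open>The MUBs M_1,...,M_{d+1}: mub d i l is the l-th basis vector of M_i, as
  a coefficient function x |-> <x|m_l>.
  M_1 = computational basis, M_2 = Fourier basis F|l>, M_{k+2} = D^k F|l>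
  for k = 1..d-1 (note M_2 is the case k = 0 of D^k F|l>).
  F|l> = 1/sqrt d sum_x omega^(x l) |x>, D|x> = omega^(x^2) |x>.\<close>
definition mub :: "nat \<Rightarrow> nat \<Rightarrow> nat \<Rightarrow> nat \<Rightarrow> complex" where
  "mub d i l x = (if i = 1 then (if x = l then 1 else 0)
     else omega d ^ ((i - 2) * x^2) * omega d ^ (x * l) / complex_of_real (sqrt (real d)))"

definition joint_prob :: "nat \<Rightarrow> complex mat \<Rightarrow> nat \<Rightarrow> nat \<Rightarrow> nat \<Rightarrow> real" where
  "joint_prob d \<rho> i j k = Re (\<Sum>a<d. \<Sum>b<d. \<Sum>a'<d. \<Sum>b'<d.
      cnj (mub d i j a * mub d i k b) * \<rho> $$ (a*d+b, a'*d+b') * (mub d i j a' * mub d i k b'))"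

definition shannon_H :: "'a set \<Rightarrow> ('a \<Rightarrow> real) \<Rightarrow> real" where
  "shannon_H S q = (\<Sum>x\<in>S. ent_term (q x))"

definition classical_MI :: "nat \<Rightarrow> complex mat \<Rightarrow> nat \<Rightarrow> real" where
  "classical_MI d \<rho> i =
     shannon_H {..<d} (\<lambda>j. \<Sum>k<d. joint_prob d \<rho> i j k)
   + shannon_H {..<d} (\<lambda>k. \<Sum>j<d. joint_prob d \<rho> i j k)
   - shannon_H ({..<d} \<times> {..<d}) (\<lambda>(j, k). joint_prob d \<rho> i j k)"

end

theory Submission
  imports Defs "HOL-Library.Real_Mod" "HOL-Computational_Algebra.Primes"
begin


definition ee :: "nat \<Rightarrow> int \<Rightarrow> complex" where
  "ee d k = cis (2 * pi * of_int k / real d)"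

lemma ee_add: "ee d (a + b) = ee d a * ee d b"
  unfolding ee_def cis_mult by (simp add: add_divide_distrib distrib_left)

lemma ee_0[simp]: "ee d 0 = 1" unfolding ee_def by simp

lemma cnj_ee: "cnj (ee d k) = ee d (-k)"
  unfolding ee_def cis_cnj by simp

lemma norm_ee[simp]: "norm (ee d k) = 1"
  unfolding ee_def by simp

lemma omega_pow: "omega d ^ m = ee d (int m)"
  unfolding omega_def ee_def DeMoivre by (simp add: mult.commute)

lemma ee_eq_1: assumes "d > 0" shows "ee d k = 1 \<longleftrightarrow> int d dvd k"
proof
  assume "ee d k = 1"
  then obtain n where n: "2 * pi * of_int k / real d = of_int n * (2 * pi)"
    unfolding ee_def cis_eq_1_iff by blast
  then have "real_of_int k = of_int n * real d" using assms by (simp add: field_simps)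
  then have "k = n * int d" by (metis of_int_eq_iff of_int_mult of_int_of_nat_eq)
  then show "int d dvd k" by simp
next
  assume "int d dvd k"
  then obtain n where "k = int d * n" by blast
  then have "2 * pi * of_int k / real d = 2 * pi * of_int n" using assms by simp
  then show "ee d k = 1" unfolding ee_def by simp
qed

lemma ee_cong: assumes "d > 0" "k mod int d = k' mod int d" shows "ee d k = ee d k'"
proof -
  have "int d dvd (k - k')" using assms(2) by (simp add: mod_eq_dvd_iff)
  then have "ee d (k - k') = 1" using ee_eq_1[OF assms(1)] by blast
  then have "ee d k = ee d (k - k') * ee d k'" using ee_add[of d "k - k'" k'] by simp
  then show ?thesis using \<open>ee d (k - k') = 1\<close> by simp
qed

lemma ee_geo: assumes "d > 0"
  shows "(\<Sum>y<d. ee d (m * int y)) = (if int d dvd m then of_nat d else 0)"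
proof (cases "int d dvd m")
  case True
  then have "ee d (m * int y) = 1" for y using ee_eq_1[OF assms] by simp
  then show ?thesis using True by simp
next
  case False
  let ?z = "ee d m"
  have pw: "ee d (m * int y) = ?z ^ y" for y
    by (induction y) (simp_all add: distrib_left ee_add mult.commute)
  have z1: "?z \<noteq> 1" using False ee_eq_1[OF assms] by simp
  have "ee d (m * int d) = 1" using ee_eq_1[OF assms] by simp
  then have zd: "?z ^ d = 1" using pw[of d] by simp
  have "(\<Sum>y<d. ee d (m * int y)) = (\<Sum>y<d. ?z ^ y)" using pw by simp
  also have "... = (1 - ?z ^ d) / (1 - ?z)" using z1 by (simp add: sum_gp_strict)
  also have "... = 0" using zd by simp
  finally show ?thesis using False by simp
qed

lemma sum_shift:
  fixes g :: "int \<Rightarrow> complex"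
  assumes d: "d > 0" and per: "\<And>k. g (k mod int d) = g k"
  shows "(\<Sum>x<d. g (int x)) = (\<Sum>t<d. g (c + int t))"
proof -
  let ?h = "\<lambda>t. nat ((c + int t) mod int d)"
  have bij: "bij_betw ?h {..<d} {..<d}"
  proof (rule bij_betw_imageI)
    show "inj_on ?h {..<d}"
    proof (rule inj_onI)
      fix t t' assume t: "t \<in> {..<d}" "t' \<in> {..<d}" and e: "?h t = ?h t'"
      have "(c + int t) mod int d = (c + int t') mod int d"
        using e d by (simp add: nat_eq_iff2)
      then have "int t mod int d = int t' mod int d" using mod_add_left_eq[of c "int d"] by (metis add_diff_cancel_left' mod_diff_left_eq)
      then show "t = t'" using t by simp
    qed
    show "?h ` {..<d} = {..<d}"
    proof
      show "?h ` {..<d} \<subseteq> {..<d}" using d by (auto simp: nat_less_iff)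
      show "{..<d} \<subseteq> ?h ` {..<d}"
      proof
        fix x assume x: "x \<in> {..<d}"
        let ?t = "nat ((int x - c) mod int d)"
        have "?t < d" using d by (simp add: nat_less_iff)
        moreover have "?h ?t = x"
        proof -
          have "(c + int ?t) mod int d = (c + (int x - c)) mod int d" using d
            by (simp add: mod_add_right_eq)
          then show ?thesis using x by simp
        qed
        ultimately show "x \<in> ?h ` {..<d}" by force
      qed
    qed
  qed
  have "(\<Sum>t<d. g (c + int t)) = (\<Sum>t<d. g (int (?h t)))"
  proof (rule sum.cong[OF refl])
    fix t assume "t \<in> {..<d}"
    have "int (?h t) = (c + int t) mod int d" using d by simp
    then show "g (c + int t) = g (int (?h t))" using per[of "c + int t"] by simp
  qed
  also have "... = (\<Sum>x<d. g (int x))"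
    using sum.reindex_bij_betw[OF bij, of "\<lambda>x. g (int x)"] by simp
  finally show ?thesis by simp
qed

lemma ee_shift: assumes "d > 0" shows "ee d (X + int d * Y) = ee d X"
proof -
  have "ee d (int d * Y) = 1" using ee_eq_1[OF assms] by simp
  then show ?thesis by (simp add: ee_add)
qed

lemma gauss_sum:
  assumes pr: "prime d" and d2: "d > 2" and A: "\<not> int d dvd A"
  shows "(\<Sum>x<d. ee d (A * int x ^ 2 + B * int x)) * cnj (\<Sum>x<d. ee d (A * int x ^ 2 + B * int x)) = of_nat d"
proof -
  have d: "d > 0" using d2 by simp
  let ?f = "\<lambda>k::int. ee d (A * k^2 + B * k)"
  have "(\<Sum>x<d. ?f (int x)) * cnj (\<Sum>x<d. ?f (int x))
      = (\<Sum>y<d. \<Sum>x<d. ee d (A * int x^2 + B * int x - A * int y^2 - B * int y))"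
    unfolding cnj_sum sum_product
    by (subst sum.swap) (simp add: cnj_ee ee_add[symmetric] algebra_simps)
  also have "... = (\<Sum>y<d. \<Sum>t<d. ee d (A * int t^2 + B * int t) * ee d ((2 * A * int t) * int y))"
  proof (rule sum.cong[OF refl])
    fix y assume "y \<in> {..<d}"
    let ?g = "\<lambda>k::int. ee d (A * k^2 + B * k - A * int y^2 - B * int y)"
    have per: "?g (k mod int d) = ?g k" for k
    proof -
      define r q where "r = k mod int d" and "q = k div int d"
      have k: "k = r + int d * q" unfolding r_def q_def by simp
      have "?g k = ee d ((A * r^2 + B * r - A * int y^2 - B * int y) + int d * (A * (2 * r * q + int d * q^2) + B * q))"
        unfolding k by (simp add: algebra_simps power2_eq_square)
      then show ?thesis unfolding r_def[symmetric] using ee_shift[OF d] by simp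
    qed
    have "(\<Sum>x<d. ?g (int x)) = (\<Sum>t<d. ?g (int y + int t))"
      by (rule sum_shift[where g = ?g, OF d per])
    also have "... = (\<Sum>t<d. ee d (A * int t^2 + B * int t) * ee d ((2 * A * int t) * int y))"
      by (rule sum.cong[OF refl]) (simp add: ee_add[symmetric] algebra_simps power2_eq_square)
    finally show "(\<Sum>x<d. ?g (int x)) = (\<Sum>t<d. ee d (A * int t^2 + B * int t) * ee d ((2 * A * int t) * int y))" .
  qed
  also have "... = (\<Sum>t<d. ee d (A * int t^2 + B * int t) * (\<Sum>y<d. ee d ((2 * A * int t) * int y)))"
    by (subst sum.swap) (simp add: sum_distrib_left)
  also have "... = (\<Sum>t<d. if t = 0 then of_nat d else 0)"
  proof (rule sum.cong[OF refl])
    fix t assume t: "t \<in> {..<d}"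
    have "int d dvd 2 * A * int t \<longleftrightarrow> t = 0"
    proof
      assume h: "int d dvd 2 * A * int t"
      have pi: "prime (int d)" using pr by simp
      have "\<not> int d dvd 2"
      proof
        assume "int d dvd 2"
        then have "d dvd 2" by (metis of_nat_numeral int_dvd_int_iff)
        then have "d \<le> 2" by (simp add: dvd_imp_le)
        then show False using d2 by simp
      qed
      then have "int d dvd int t" using h A prime_dvd_mult_iff[OF pi] by auto
      then have "d dvd t" by simp
      then show "t = 0" using t by (auto dest: dvd_imp_le)
    qed simp
    then show "ee d (A * int t^2 + B * int t) * (\<Sum>y<d. ee d ((2 * A * int t) * int y)) = (if t = 0 then of_nat d else 0)"
      using ee_geo[OF d, of "2 * A * int t"] by auto
  qed
  also have "... = of_nat d" using d by simp
  finally show ?thesis .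
qed

lemma iso_entry:
  assumes "a < d" "b < d" "a' < d" "b' < d"
  shows "iso_state d p $$ (a*d+b, a'*d+b') =
    (if a = b \<and> a' = b' then complex_of_real p / of_nat d else 0)
    + (if a = a' \<and> b = b' then complex_of_real (1 - p) / of_nat (d^2) else 0)"
proof -
  have d: "d > 0" using assms by simp
  have lt: "x*d+y < d*d" if "x < d" "y < d" for x y
  proof -
    have "x*d+y < x*d + d" using that by simp
    also have "... = (x+1)*d" by simp
    also have "... \<le> d*d" using that by (intro mult_right_mono) auto
    finally show ?thesis .
  qed
  have dv: "(x*d+y) div d = x" "(x*d+y) mod d = y" if "y < d" for x y
    using that by auto
  have eq: "(a*d+b = a'*d+b') \<longleftrightarrow> a = a' \<and> b = b'"
    using dv[OF assms(2), of a] dv[OF assms(4), of a'] by metis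
  show ?thesis
    unfolding iso_state_def using lt[OF assms(1,2)] lt[OF assms(3,4)] dv[OF assms(2), of a] dv[OF assms(4), of a'] eq
    by simp
qed

lemma sum4_delta1:
  fixes d :: nat
  shows
  "(\<Sum>a<d. \<Sum>b<d. \<Sum>a'<d. \<Sum>b'<d. (if a = b \<and> a' = b' then F a b a' b' else 0)) =
   (\<Sum>a<d. \<Sum>a'<d. F a a a' a' :: complex)"
proof -
  have "(\<Sum>b'<d. (if a = b \<and> a' = b' then F a b a' b' else 0)) = (if a = b then F a b a' a' else 0)"
    if "a' < d" for a b a' using that by (cases "a = b") auto
  then have "(\<Sum>a<d. \<Sum>b<d. \<Sum>a'<d. \<Sum>b'<d. (if a = b \<and> a' = b' then F a b a' b' else 0)) =
     (\<Sum>a<d. \<Sum>b<d. \<Sum>a'<d. (if a = b then F a b a' a' else 0))" by simp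
  also have "... = (\<Sum>a<d. \<Sum>b<d. (if a = b then (\<Sum>a'<d. F a b a' a') else 0))"
    by (simp add: if_distrib sum.If_cases)
  also have "... = (\<Sum>a<d. \<Sum>a'<d. F a a a' a')" by simp
  finally show ?thesis .
qed

lemma sum4_delta2:
  fixes d :: nat
  shows
  "(\<Sum>a<d. \<Sum>b<d. \<Sum>a'<d. \<Sum>b'<d. (if a = a' \<and> b = b' then F a b a' b' else 0)) =
   (\<Sum>a<d. \<Sum>b<d. F a b a b :: complex)"
proof -
  have "(\<Sum>a'<d. \<Sum>b'<d. (if a = a' \<and> b = b' then F a b a' b' else 0)) = F a b a b"
    if "a < d" "b < d" for a b
  proof -
    have "(\<Sum>a'<d. \<Sum>b'<d. (if a = a' \<and> b = b' then F a b a' b' else 0))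
        = (\<Sum>a'<d. if a = a' then F a b a' b else 0)"
    proof (rule sum.cong[OF refl])
      fix a' assume "a' \<in> {..<d}"
      show "(\<Sum>b'<d. (if a = a' \<and> b = b' then F a b a' b' else 0)) = (if a = a' then F a b a' b else 0)"
        using that by (cases "a = a'") auto
    qed
    also have "... = F a b a b" using that by (simp add: sum.delta sum.delta')
    finally show ?thesis .
  qed
  then show ?thesis by simp
qed

lemma joint_term:
  assumes "a < d" "b < d" "a' < d" "b' < d"
  shows "cnj (f a * g b) * iso_state d p $$ (a*d+b, a'*d+b') * (f a' * g b') =
      (if a = b \<and> a' = b' then complex_of_real p / of_nat d * (cnj (f a * g b) * (f a' * g b')) else 0)
    + (if a = a' \<and> b = b' then complex_of_real (1 - p) / of_nat (d^2) * (cnj (f a * g b) * (f a' * g b')) else 0)"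
  unfolding iso_entry[OF assms] by (simp add: algebra_simps)

lemma joint_iso:
  "joint_prob d (iso_state d p) i j k =
   Re (complex_of_real p / of_nat d * ((\<Sum>a<d. mub d i j a * mub d i k a) * cnj (\<Sum>a<d. mub d i j a * mub d i k a))
     + complex_of_real (1 - p) / of_nat (d^2) * ((\<Sum>a<d. cnj (mub d i j a) * mub d i j a) * (\<Sum>b<d. cnj (mub d i k b) * mub d i k b)))"
proof -
  let ?f = "mub d i j" and ?g = "mub d i k"
  let ?X = "\<lambda>a b a' b'. cnj (?f a * ?g b) * (?f a' * ?g b')"
  have "joint_prob d (iso_state d p) i j k = Re (\<Sum>a<d. \<Sum>b<d. \<Sum>a'<d. \<Sum>b'<d.
      (if a = b \<and> a' = b' then complex_of_real p / of_nat d * ?X a b a' b' else 0)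
    + (if a = a' \<and> b = b' then complex_of_real (1 - p) / of_nat (d^2) * ?X a b a' b' else 0))"
    unfolding joint_prob_def
    by (intro arg_cong[where f = Re] sum.cong refl, rule joint_term) auto
  also have "... = Re ((\<Sum>a<d. \<Sum>a'<d. complex_of_real p / of_nat d * ?X a a a' a')
     + (\<Sum>a<d. \<Sum>b<d. complex_of_real (1 - p) / of_nat (d^2) * ?X a b a b))"
    by (simp only: sum.distrib sum4_delta1 sum4_delta2)
  also have "(\<Sum>a<d. \<Sum>a'<d. complex_of_real p / of_nat d * ?X a a a' a')
     = complex_of_real p / of_nat d * ((\<Sum>a<d. ?f a * ?g a) * cnj (\<Sum>a<d. ?f a * ?g a))"
    by (simp add: sum_distrib_left sum_product cnj_sum algebra_simps)
  also have "(\<Sum>a<d. \<Sum>b<d. complex_of_real (1 - p) / of_nat (d^2) * ?X a b a b)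
     = complex_of_real (1 - p) / of_nat (d^2) * ((\<Sum>a<d. cnj (?f a) * ?f a) * (\<Sum>b<d. cnj (?g b) * ?g b))"
    by (simp add: sum_distrib_left sum_product algebra_simps) (subst sum.swap, rule refl)
  finally show ?thesis .
qed

lemma Re_joint_form:
  "Re (complex_of_real p / of_nat d * complex_of_real X + complex_of_real (1 - p) / of_nat (d^2) * (1 * 1))
   = p / d * X + (1 - p) / real d ^ 2"
proof -
  have "complex_of_real p / of_nat d * complex_of_real X + complex_of_real (1 - p) / of_nat (d^2) * (1 * 1)
     = complex_of_real (p / d * X + (1 - p) / real d ^ 2)" by simp
  then show ?thesis by (simp only: Re_complex_of_real)
qed

lemma joint_1:
  assumes "j < d" "k < d"
  shows "joint_prob d (iso_state d p) 1 j k = p / d * (if j = k then 1 else 0) + (1 - p) / real d ^ 2"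
proof -
  have S: "(\<Sum>a<d. mub d 1 j a * mub d 1 k a) = (if j = k then 1 else 0)"
    using assms by (simp add: mub_def if_distrib[of "\<lambda>x. x * _"] cong: if_cong)
  have N: "(\<Sum>a<d. cnj (mub d 1 l a) * mub d 1 l a) = 1" if "l < d" for l
  proof -
    have h: "\<And>a. cnj (mub d 1 l a) * mub d 1 l a = (if a = l then 1 else 0)"
      by (auto simp: mub_def)
    show ?thesis unfolding h using that by simp
  qed
  have SS: "(if j = k then 1 else 0) * cnj (if j = k then 1 else 0) = complex_of_real (if j = k then 1 else 0)"
    by simp
  show ?thesis unfolding joint_iso S SS N[OF assms(1)] N[OF assms(2)] Re_joint_form ..
qed

lemma mub_ge2:
  assumes "i \<noteq> 1"
  shows "mub d i l x = ee d (int ((i-2)*x^2) + int (x*l)) / complex_of_real (sqrt (real d))"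
  using assms unfolding mub_def by (simp add: omega_pow ee_add)

lemma mub_norm:
  assumes "i \<noteq> 1" "d > 0"
  shows "cnj (mub d i l x) * mub d i l x = 1 / of_nat d"
proof -
  let ?k = "int ((i-2)*x^2) + int (x*l)"
  have "cnj (mub d i l x) * mub d i l x = (ee d (- ?k) * ee d ?k) / (complex_of_real (sqrt (real d)))^2"
    unfolding mub_ge2[OF assms(1)] by (simp add: cnj_ee power2_eq_square)
  also have "ee d (- ?k) * ee d ?k = 1" by (simp add: ee_add[symmetric])
  also have "(complex_of_real (sqrt (real d)))^2 = of_nat d"
    by (simp flip: of_real_power)
  finally show ?thesis .
qed

lemma mub_normsum:
  assumes "i \<noteq> 1" "d > 0"
  shows "(\<Sum>a<d. cnj (mub d i l a) * mub d i l a) = 1"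
  using assms by (simp add: mub_norm)

lemma mub_prod:
  assumes "i \<noteq> 1" "d > 0"
  shows "mub d i j a * mub d i k a = ee d (int (2*(i-2)) * int a ^ 2 + int (j+k) * int a) / of_nat d"
proof -
  have "mub d i j a * mub d i k a = ee d (int ((i-2)*a^2) + int (a*j)) * ee d (int ((i-2)*a^2) + int (a*k)) / (complex_of_real (sqrt (real d)))^2"
    unfolding mub_ge2[OF assms(1)] by (simp only: power2_eq_square times_divide_times_eq)
  also have "ee d (int ((i-2)*a^2) + int (a*j)) * ee d (int ((i-2)*a^2) + int (a*k)) = ee d ((int ((i-2)*a^2) + int (a*j)) + (int ((i-2)*a^2) + int (a*k)))"
    by (rule ee_add[symmetric])
  also have "(complex_of_real (sqrt (real d)))^2 = of_nat d"
    by (simp flip: of_real_power)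
  also have "(int ((i-2)*a^2) + int (a*j)) + (int ((i-2)*a^2) + int (a*k)) = int (2*(i-2)) * int a ^ 2 + int (j+k) * int a"
  proof -
    have "\<forall>m::nat. (int (m*a^2) + int (a*j)) + (int (m*a^2) + int (a*k)) = int (2*m) * int a ^ 2 + int (j+k) * int a"
      by (simp add: algebra_simps)
    then show ?thesis by blast
  qed
  finally show ?thesis .
qed

lemma S_ge2:
  assumes "i \<noteq> 1" "d > 0"
  shows "(\<Sum>a<d. mub d i j a * mub d i k a) = (\<Sum>a<d. ee d (int (2*(i-2)) * int a ^ 2 + int (j+k) * int a)) / of_nat d"
  unfolding mub_prod[OF assms] by (simp add: sum_divide_distrib)

lemma joint_2:
  assumes "d > 0"
  shows "joint_prob d (iso_state d p) 2 j k = p / d * (if d dvd (j+k) then 1 else 0) + (1 - p) / real d ^ 2"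
proof -
  have G: "(\<Sum>a<d. ee d (int (2*(2-2)) * int a ^ 2 + int (j+k) * int a)) = (if d dvd (j+k) then of_nat d else 0)"
  proof -
    have e: "int d dvd int (j+k) \<longleftrightarrow> d dvd (j+k)" by (rule int_dvd_int_iff)
    show ?thesis using ee_geo[OF assms, of "int (j+k)"] unfolding e by simp
  qed
  have S: "(\<Sum>a<d. mub d 2 j a * mub d 2 k a) = (if d dvd (j+k) then 1 else 0)"
  proof -
    have s2: "(\<Sum>a<d. mub d 2 j a * mub d 2 k a) = (\<Sum>a<d. ee d (int (2*(2-2)) * int a ^ 2 + int (j+k) * int a)) / of_nat d"
      by (rule S_ge2) (use assms in auto)
    show ?thesis unfolding s2 G using assms by simp
  qed
  have SS: "(if d dvd (j+k) then 1 else 0) * cnj (if d dvd (j+k) then 1 else 0) = complex_of_real (if d dvd (j+k) then 1 else 0)"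
    by simp
  have n2: "(\<Sum>a<d. cnj (mub d 2 l a) * mub d 2 l a) = 1" for l
    by (rule mub_normsum) (use assms in auto)
  show ?thesis unfolding joint_iso S SS n2 Re_joint_form by simp
qed

lemma joint_3:
  assumes pr: "prime d" and d2: "d > 2" and i: "3 \<le> i" "i \<le> d + 1"
  shows "joint_prob d (iso_state d p) i j k = 1 / real d ^ 2"
proof -
  have d: "d > 0" using d2 by simp
  have i1: "i \<noteq> 1" using i by simp
  let ?A = "int (2*(i-2))" and ?B = "int (j+k)"
  have A: "\<not> int d dvd ?A"
  proof
    assume "int d dvd ?A"
    then have "d dvd 2*(i-2)" by (simp only: int_dvd_int_iff)
    then have "d dvd 2 \<or> d dvd (i-2)" using pr prime_dvd_mult_iff by blast
    moreover have "\<not> d dvd 2" using d2 by (auto dest: dvd_imp_le)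
    moreover have "\<not> d dvd (i-2)" using i by (auto dest: dvd_imp_le)
    ultimately show False by blast
  qed
  let ?G = "\<Sum>a<d. ee d (?A * int a ^ 2 + ?B * int a)"
  have GG: "?G * cnj ?G = of_nat d" by (rule gauss_sum[OF pr d2 A])
  have "(\<Sum>a<d. mub d i j a * mub d i k a) * cnj (\<Sum>a<d. mub d i j a * mub d i k a)
      = ?G * cnj ?G / (of_nat d)^2"
    unfolding S_ge2[OF i1 d] by (simp add: power2_eq_square)
  also have "... = complex_of_real (1 / d)" unfolding GG using d by (simp add: power2_eq_square)
  finally have SS: "(\<Sum>a<d. mub d i j a * mub d i k a) * cnj (\<Sum>a<d. mub d i j a * mub d i k a) = complex_of_real (1 / d)" .
  show ?thesis unfolding joint_iso SS mub_normsum[OF i1 d] Re_joint_form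
    using d by (simp add: field_simps power2_eq_square)
qed

lemma sum_if_unique:
  fixes X Y :: real
  assumes k0: "k0 < d" and P: "\<And>k. k < d \<Longrightarrow> P k \<longleftrightarrow> k = k0"
  shows "(\<Sum>k<d. if P k then X else Y) = X + (real d - 1) * Y"
proof -
  have "(\<Sum>k<d. if P k then X else Y) = (\<Sum>k<d. if k = k0 then X else Y)"
    using P by (intro sum.cong) auto
  also have "... = X + (\<Sum>k\<in>{..<d}-{k0}. Y)"
    using k0 by (subst sum.delta_remove) auto
  also have "(\<Sum>k\<in>{..<d}-{k0}. Y) = (real d - 1) * Y"
    using k0 by (simp add: card_Diff_singleton of_nat_diff)
  finally show ?thesis .
qed

lemma cmi_perm:
  assumes d: "d > 0"
    and s: "\<And>j k. j < d \<Longrightarrow> k < d \<Longrightarrow> P j k \<longleftrightarrow> k = \<sigma> j" "\<And>j. j < d \<Longrightarrow> \<sigma> j < d"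
    and t: "\<And>j k. j < d \<Longrightarrow> k < d \<Longrightarrow> P j k \<longleftrightarrow> j = \<tau> k" "\<And>k. k < d \<Longrightarrow> \<tau> k < d"
    and J: "\<And>j k. j < d \<Longrightarrow> k < d \<Longrightarrow> joint_prob d \<rho> i j k = (if P j k then X else Y)"
  shows "classical_MI d \<rho> i = 2 * real d * ent_term (X + (real d - 1) * Y) - d * (ent_term X + (real d - 1) * ent_term Y)"
proof -
  have m1: "(\<Sum>k<d. joint_prob d \<rho> i j k) = X + (real d - 1) * Y" if "j < d" for j
  proof -
    have "(\<Sum>k<d. joint_prob d \<rho> i j k) = (\<Sum>k<d. if P j k then X else Y)"
      using J that by simp
    also have "... = X + (real d - 1) * Y" by (rule sum_if_unique[OF s(2)[OF that]]) (use s that in auto)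
    finally show ?thesis .
  qed
  have m2: "(\<Sum>j<d. joint_prob d \<rho> i j k) = X + (real d - 1) * Y" if "k < d" for k
  proof -
    have "(\<Sum>j<d. joint_prob d \<rho> i j k) = (\<Sum>j<d. if P j k then X else Y)"
      using J that by simp
    also have "... = X + (real d - 1) * Y" by (rule sum_if_unique[OF t(2)[OF that]]) (use t that in auto)
    finally show ?thesis .
  qed
  have m3: "(\<Sum>k<d. ent_term (joint_prob d \<rho> i j k)) = ent_term X + (real d - 1) * ent_term Y" if "j < d" for j
  proof -
    have "(\<Sum>k<d. ent_term (joint_prob d \<rho> i j k)) = (\<Sum>k<d. if P j k then ent_term X else ent_term Y)"
      using J that by (intro sum.cong) auto
    also have "... = ent_term X + (real d - 1) * ent_term Y" by (rule sum_if_unique[OF s(2)[OF that]]) (use s that in auto)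
    finally show ?thesis .
  qed
  have H1: "shannon_H {..<d} (\<lambda>j. \<Sum>k<d. joint_prob d \<rho> i j k) = d * ent_term (X + (real d - 1) * Y)"
    unfolding shannon_H_def using m1 by simp
  have H2: "shannon_H {..<d} (\<lambda>k. \<Sum>j<d. joint_prob d \<rho> i j k) = d * ent_term (X + (real d - 1) * Y)"
    unfolding shannon_H_def using m2 by simp
  have H3: "shannon_H ({..<d} \<times> {..<d}) (\<lambda>(j, k). joint_prob d \<rho> i j k) = d * (ent_term X + (real d - 1) * ent_term Y)"
  proof -
    have "shannon_H ({..<d} \<times> {..<d}) (\<lambda>(j, k). joint_prob d \<rho> i j k) = (\<Sum>j<d. \<Sum>k<d. ent_term (joint_prob d \<rho> i j k))"
      unfolding shannon_H_def by (simp add: sum.cartesian_product split_def)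
    also have "... = d * (ent_term X + (real d - 1) * ent_term Y)" using m3 by simp
    finally show ?thesis .
  qed
  show ?thesis unfolding classical_MI_def H1 H2 H3 by simp
qed

lemma dvd_sum_iff:
  fixes d j k :: nat
  assumes "j < d" "k < d"
  shows "d dvd (j + k) \<longleftrightarrow> k = (d - j) mod d"
proof (cases "j = 0")
  case True
  then show ?thesis using assms by (auto dest: dvd_imp_le)
next
  case False
  then have m: "(d - j) mod d = d - j" using assms by simp
  show ?thesis
  proof
    assume "d dvd (j + k)"
    then obtain c where c: "j + k = d * c" by blast
    have "c \<noteq> 0" using c False by (metis add_is_0 mult_0_right)
    moreover have "c < 2"
    proof (rule ccontr)
      assume "\<not> c < 2"
      then have "d * 2 \<le> d * c" by simp
      then show False using c assms by linarith
    qed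
    ultimately have "c = 1" by linarith
    then show "k = (d - j) mod d" using c m by simp
  next
    assume "k = (d - j) mod d"
    then show "d dvd (j + k)" using m assms by simp
  qed
qed

lemma cmi_1:
  assumes d: "d > 0"
  shows "classical_MI d (iso_state d p) 1 = 2 * real d * ent_term (1 / d) - d * (ent_term (p / d + (1 - p) / real d ^ 2) + (real d - 1) * ent_term ((1 - p) / real d ^ 2))"
proof -
  have "classical_MI d (iso_state d p) 1 = 2 * real d * ent_term ((p / d + (1 - p) / real d ^ 2) + (real d - 1) * ((1 - p) / real d ^ 2)) - d * (ent_term (p / d + (1 - p) / real d ^ 2) + (real d - 1) * ent_term ((1 - p) / real d ^ 2))"
    by (rule cmi_perm[OF d, where P = "\<lambda>j k. j = k" and \<sigma> = id and \<tau> = id]) (use joint_1 in auto)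
  also have "(p / d + (1 - p) / real d ^ 2) + (real d - 1) * ((1 - p) / real d ^ 2) = 1 / d"
    using d by (simp add: field_simps power2_eq_square)
  finally show ?thesis .
qed

lemma cmi_2:
  assumes d: "d > 0"
  shows "classical_MI d (iso_state d p) 2 = 2 * real d * ent_term (1 / d) - d * (ent_term (p / d + (1 - p) / real d ^ 2) + (real d - 1) * ent_term ((1 - p) / real d ^ 2))"
proof -
  have "classical_MI d (iso_state d p) 2 = 2 * real d * ent_term ((p / d + (1 - p) / real d ^ 2) + (real d - 1) * ((1 - p) / real d ^ 2)) - d * (ent_term (p / d + (1 - p) / real d ^ 2) + (real d - 1) * ent_term ((1 - p) / real d ^ 2))"
  proof (rule cmi_perm[OF d, where P = "\<lambda>j k. d dvd (j + k)" and \<sigma> = "\<lambda>j. (d - j) mod d" and \<tau> = "\<lambda>j. (d - j) mod d"])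
    show "\<And>j k. j < d \<Longrightarrow> k < d \<Longrightarrow> d dvd (j + k) \<longleftrightarrow> k = (d - j) mod d" by (rule dvd_sum_iff)
    show "\<And>j k. j < d \<Longrightarrow> k < d \<Longrightarrow> d dvd (j + k) \<longleftrightarrow> j = (d - k) mod d"
      using dvd_sum_iff by (metis add.commute)
    show "\<And>j. j < d \<Longrightarrow> (d - j) mod d < d" using d by simp
    show "\<And>j. j < d \<Longrightarrow> (d - j) mod d < d" using d by simp
    show "\<And>j k. j < d \<Longrightarrow> k < d \<Longrightarrow> joint_prob d (iso_state d p) 2 j k =
      (if d dvd (j + k) then p / d + (1 - p) / real d ^ 2 else (1 - p) / real d ^ 2)"
      using joint_2[OF d] by simp
  qed
  also have "(p / d + (1 - p) / real d ^ 2) + (real d - 1) * ((1 - p) / real d ^ 2) = 1 / d"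
    using d by (simp add: field_simps power2_eq_square)
  finally show ?thesis .
qed

lemma cmi_3:
  assumes pr: "prime d" and d2: "d > 2" and i: "3 \<le> i" "i \<le> d + 1"
  shows "classical_MI d (iso_state d p) i = 2 * real d * ent_term (1 / d) - d * (d * ent_term (1 / real d ^ 2))"
proof -
  have d: "d > 0" using d2 by simp
  have "classical_MI d (iso_state d p) i = 2 * real d * ent_term (1 / real d ^ 2 + (real d - 1) * (1 / real d ^ 2)) - d * (ent_term (1 / real d ^ 2) + (real d - 1) * ent_term (1 / real d ^ 2))"
    by (rule cmi_perm[OF d, where P = "\<lambda>j k. j = k" and \<sigma> = id and \<tau> = id]) (auto simp: joint_3[OF pr d2 i])
  also have "1 / real d ^ 2 + (real d - 1) * (1 / real d ^ 2) = 1 / d"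
    using d by (simp add: field_simps power2_eq_square)
  also have "ent_term (1 / real d ^ 2) + (real d - 1) * ent_term (1 / real d ^ 2) = d * ent_term (1 / real d ^ 2)"
    by (simp add: algebra_simps)
  finally show ?thesis .
qed



lemma mult_mat_entry:
  assumes "i < n" "j < n"
  shows "(mat n n (\<lambda>(i,k). f i k) * mat n n (\<lambda>(k,j). g k j)) $$ (i,j) = (\<Sum>k<n. f i k * g k j)"
  using assms by (simp add: scalar_prod_def lessThan_atLeast0)

lemma proots_linears: "proots (\<Prod>a\<leftarrow>xs. [:- a, 1:]) = mset (xs :: complex list)"
proof (induction xs)
  case (Cons x xs)
  have nz: "(\<Prod>a\<leftarrow>xs. [:- a, 1:]) \<noteq> 0" by (auto simp: prod_list_zero_iff)
  have "proots (\<Prod>a\<leftarrow>x # xs. [:- a, 1:]) = proots [:- x, 1:] + proots (\<Prod>a\<leftarrow>xs. [:- a, 1:])"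
    using nz by (simp only: prod_list.Cons list.map, subst proots_mult) auto
  then show ?case using Cons by simp
qed simp

lemma vn_entropy_upper:
  assumes A: "A \<in> carrier_mat n n" and ut: "upper_triangular A"
  shows "vn_entropy A = (\<Sum>i<n. ent_term (Re (A $$ (i,i))))"
proof -
  have cp: "char_poly A = (\<Prod>a\<leftarrow>diag_mat A. [:- a, 1:])"
    by (rule char_poly_upper_triangular[OF A ut])
  have "proots (char_poly A) = mset (diag_mat A)"
    unfolding cp by (rule proots_linears)
  then have "vn_entropy A = (\<Sum>e\<in>#mset (diag_mat A). ent_term (Re e))"
    unfolding vn_entropy_def by simp
  also have "... = (\<Sum>e\<leftarrow>diag_mat A. ent_term (Re e))"
    by (metis mset_map sum_mset_sum_list)
  also have "... = (\<Sum>i<n. ent_term (Re (A $$ (i,i))))"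
    using A unfolding diag_mat_def by (simp add: sum_list_sum_nth lessThan_atLeast0)
  finally show ?thesis .
qed

lemma ptrace_B_iso:
  assumes d: "d > 0"
  shows "ptrace_B d (iso_state d p) = mat d d (\<lambda>(a,a'). if a = a' then 1 / of_nat d else 0)"
proof (rule eq_matI)
  fix a a' assume a: "a < dim_row (mat d d (\<lambda>(a,a'). if a = a' then 1 / of_nat d else (0::complex)))"
    and a': "a' < dim_col (mat d d (\<lambda>(a,a'). if a = a' then 1 / of_nat d else (0::complex)))"
  then have a: "a < d" and a': "a' < d" by auto
  have "ptrace_B d (iso_state d p) $$ (a, a') = (\<Sum>b<d. iso_state d p $$ (a*d+b, a'*d+b))"
    unfolding ptrace_B_def using a a' by simp
  also have "... = (\<Sum>b<d. (if a = b \<and> a' = b then complex_of_real p / of_nat d else 0)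
    + (if a = a' then complex_of_real (1 - p) / of_nat (d^2) else 0))"
    using a a' by (intro sum.cong refl) (simp add: iso_entry)
  also have "... = (if a = a' then complex_of_real p / of_nat d else 0) + of_nat d * (if a = a' then complex_of_real (1 - p) / of_nat (d^2) else 0)"
  proof (cases "a = a'")
    case True then show ?thesis using a by (simp add: sum.distrib)
  next
    case False
    have "(\<Sum>b<d. if a = b \<and> a' = b then complex_of_real p / of_nat d else 0) = 0"
      using False by (intro sum.neutral) auto
    then show ?thesis using False by (simp add: sum.distrib)
  qed
  also have "... = (if a = a' then 1 / of_nat d else 0)"
    using d by (auto simp: field_simps power2_eq_square)
  finally show "ptrace_B d (iso_state d p) $$ (a, a') = mat d d (\<lambda>(a,a'). if a = a' then 1 / of_nat d else 0) $$ (a, a')"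
    using a a' by simp
qed (auto simp: ptrace_B_def)

lemma ptrace_A_iso:
  assumes d: "d > 0"
  shows "ptrace_A d (iso_state d p) = mat d d (\<lambda>(a,a'). if a = a' then 1 / of_nat d else 0)"
proof (rule eq_matI)
  fix b b' assume b: "b < dim_row (mat d d (\<lambda>(a,a'). if a = a' then 1 / of_nat d else (0::complex)))"
    and b': "b' < dim_col (mat d d (\<lambda>(a,a'). if a = a' then 1 / of_nat d else (0::complex)))"
  then have b: "b < d" and b': "b' < d" by auto
  have "ptrace_A d (iso_state d p) $$ (b, b') = (\<Sum>a<d. iso_state d p $$ (a*d+b, a*d+b'))"
    unfolding ptrace_A_def using b b' by simp
  also have "... = (\<Sum>a<d. (if a = b \<and> a = b' then complex_of_real p / of_nat d else 0)
    + (if b = b' then complex_of_real (1 - p) / of_nat (d^2) else 0))"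
    using b b' by (intro sum.cong refl) (simp add: iso_entry)
  also have "... = (if b = b' then complex_of_real p / of_nat d else 0) + of_nat d * (if b = b' then complex_of_real (1 - p) / of_nat (d^2) else 0)"
  proof (cases "b = b'")
    case True then show ?thesis using b by (simp add: sum.distrib)
  next
    case False
    have "(\<Sum>a<d. if a = b \<and> a = b' then complex_of_real p / of_nat d else 0) = 0"
      using False by (intro sum.neutral) auto
    then show ?thesis using False by (simp add: sum.distrib)
  qed
  also have "... = (if b = b' then 1 / of_nat d else 0)"
    using d by (auto simp: field_simps power2_eq_square)
  finally show "ptrace_A d (iso_state d p) $$ (b, b') = mat d d (\<lambda>(a,a'). if a = a' then 1 / of_nat d else 0) $$ (b, b')"
    using b b' by simp
qed (auto simp: ptrace_A_def)

lemma vn_entropy_scalar: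
  "vn_entropy (mat d d (\<lambda>(a,a'). if a = a' then 1 / of_nat d else 0)) = d * ent_term (1 / d)"
proof -
  have "vn_entropy (mat d d (\<lambda>(a,a'). if a = a' then 1 / of_nat d else 0)) = (\<Sum>i<d. ent_term (Re (1 / of_nat d)))"
    by (subst vn_entropy_upper[where n = d]) (auto simp: upper_triangular_def)
  also have "Re (1 / of_nat d) = 1 / d" by (simp add: Re_divide power2_eq_square)
  finally show ?thesis by simp
qed

lemma row_sum_P:
  fixes g :: "nat \<Rightarrow> complex"
  assumes "r < n" "0 < n"
  shows "(\<Sum>k<n. ((if k = r then 1 else 0) + (if k = 0 then e else 0)) * g k) = g r + e * g 0"
  using assms by (simp add: distrib_right sum.distrib if_distrib[of "\<lambda>x. x * _"] cong: if_cong)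

lemma row_sum_Q:
  fixes g :: "nat \<Rightarrow> complex"
  assumes "r < n" "0 < n"
  shows "(\<Sum>k<n. ((if k = r then 1 else 0) - (if k = 0 then e else 0)) * g k) = g r - e * g 0"
  using assms by (simp add: left_diff_distrib sum_subtractf if_distrib[of "\<lambda>x. x * _"] cong: if_cong)

lemma row_sum_M:
  fixes g :: "nat \<Rightarrow> complex"
  assumes "r < n"
  shows "(\<Sum>k<n. (q * (if Dm r \<and> Dm k then 1 else 0) + c * (if r = k then 1 else 0)) * g k)
    = q * (if Dm r then 1 else 0) * (\<Sum>k<n. (if Dm k then 1 else 0) * g k) + c * g r"
proof -
  have "(\<Sum>k<n. (q * (if Dm r \<and> Dm k then 1 else 0) + c * (if r = k then 1 else 0)) * g k)
     = (\<Sum>k<n. q * (if Dm r then 1 else 0) * ((if Dm k then 1 else 0) * g k) + (if r = k then c * g k else 0))"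
    by (intro sum.cong refl) (auto simp: algebra_simps)
  also have "... = q * (if Dm r then 1 else 0) * (\<Sum>k<n. (if Dm k then 1 else 0) * g k) + c * g r"
    using assms by (simp add: sum.distrib sum_distrib_left)
  finally show ?thesis .
qed

lemma similar_rank1:
  fixes q c :: complex and Dm :: "nat \<Rightarrow> bool"
  assumes n: "n > 0" and D0: "Dm 0"
  defines "e \<equiv> \<lambda>r. if r \<noteq> 0 \<and> Dm r then (1::complex) else 0"
  defines "m \<equiv> (\<Sum>k<n. e k)"
  defines "M \<equiv> mat n n (\<lambda>(r,s). q * (if Dm r \<and> Dm s then 1 else 0) + c * (if r = s then 1 else 0))"
  defines "T \<equiv> mat n n (\<lambda>(r,s). (if r = s then c else 0) + (if r = 0 then q * ((if Dm s then 1 else 0) + (if s = 0 then m else 0)) else 0))"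
  shows "similar_mat M T"
proof -
  define P where "P = mat n n (\<lambda>(r,k). (if k = r then 1 else 0) + (if k = 0 then e r else (0::complex)))"
  define Q where "Q = mat n n (\<lambda>(r,k). (if k = r then 1 else 0) - (if k = 0 then e r else (0::complex)))"
  have carr: "M \<in> carrier_mat n n" "T \<in> carrier_mat n n" "P \<in> carrier_mat n n" "Q \<in> carrier_mat n n"
    unfolding M_def T_def P_def Q_def by auto
  have e0: "e 0 = 0" unfolding e_def by simp
  have PQ: "P * Q = 1\<^sub>m n"
  proof (rule eq_matI)
    fix r s assume rs: "r < dim_row (1\<^sub>m n :: complex mat)" "s < dim_col (1\<^sub>m n :: complex mat)"
    then have r: "r < n" and s: "s < n" by auto
    have "(P * Q) $$ (r, s) = (\<Sum>k<n. ((if k = r then 1 else 0) + (if k = 0 then e r else 0)) *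
        ((if s = k then 1 else 0) - (if s = 0 then e k else 0)))"
      unfolding P_def Q_def by (rule mult_mat_entry[OF r s])
    also have "... = ((if s = r then 1 else 0) - (if s = 0 then e r else 0)) + e r * ((if s = 0 then 1 else 0) - (if s = 0 then e 0 else 0))"
      by (rule row_sum_P[OF r n])
    also have "... = (if r = s then 1 else 0)" using e0 by auto
    finally show "(P * Q) $$ (r, s) = 1\<^sub>m n $$ (r, s)" using r s by simp
  qed (auto simp: P_def Q_def)
  have QP: "Q * P = 1\<^sub>m n"
  proof (rule eq_matI)
    fix r s assume rs: "r < dim_row (1\<^sub>m n :: complex mat)" "s < dim_col (1\<^sub>m n :: complex mat)"
    then have r: "r < n" and s: "s < n" by auto
    have "(Q * P) $$ (r, s) = (\<Sum>k<n. ((if k = r then 1 else 0) - (if k = 0 then e r else 0)) *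
        ((if s = k then 1 else 0) + (if s = 0 then e k else 0)))"
      unfolding P_def Q_def by (rule mult_mat_entry[OF r s])
    also have "... = ((if s = r then 1 else 0) + (if s = 0 then e r else 0)) - e r * ((if s = 0 then 1 else 0) + (if s = 0 then e 0 else 0))"
      by (rule row_sum_Q[OF r n])
    also have "... = (if r = s then 1 else 0)" using e0 by auto
    finally show "(Q * P) $$ (r, s) = 1\<^sub>m n $$ (r, s)" using r s by simp
  qed (auto simp: P_def Q_def)
  have colsum: "(\<Sum>k<n. (if Dm k then 1 else 0) * ((if s = k then 1 else 0) + (if s = 0 then e k else 0)))
      = (if Dm s then 1 else 0) + (if s = 0 then m else 0)" if s: "s < n" for s
  proof -
    have "(\<Sum>k<n. (if Dm k then 1 else 0) * ((if s = k then 1 else 0) + (if s = 0 then e k else 0)))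
       = (\<Sum>k<n. (if s = k then (if Dm k then 1 else 0) else 0)) + (\<Sum>k<n. (if s = 0 then e k else 0))"
      unfolding sum.distrib[symmetric] by (intro sum.cong refl) (auto simp: e_def)
    also have "... = (if Dm s then 1 else 0) + (if s = 0 then m else 0)"
      using s unfolding m_def by simp
    finally show ?thesis .
  qed
  have MP: "M * P = P * T"
  proof (rule eq_matI)
    fix r s assume rs: "r < dim_row (P * T)" "s < dim_col (P * T)"
    then have r: "r < n" and s: "s < n" unfolding P_def T_def by auto
    let ?v = "(if Dm s then 1 else 0) + (if s = 0 then m else 0)"
    have "(M * P) $$ (r, s) = (\<Sum>k<n. (q * (if Dm r \<and> Dm k then 1 else 0) + c * (if r = k then 1 else 0)) *
        ((if s = k then 1 else 0) + (if s = 0 then e k else 0)))"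
      unfolding M_def P_def by (rule mult_mat_entry[OF r s])
    also have "... = q * (if Dm r then 1 else 0) * (\<Sum>k<n. (if Dm k then 1 else 0) * ((if s = k then 1 else 0) + (if s = 0 then e k else 0)))
        + c * ((if s = r then 1 else 0) + (if s = 0 then e r else 0))"
      by (rule row_sum_M[OF r])
    also have "... = q * (if Dm r then 1 else 0) * ?v + c * ((if s = r then 1 else 0) + (if s = 0 then e r else 0))"
      unfolding colsum[OF s] ..
    finally have L: "(M * P) $$ (r, s) = q * (if Dm r then 1 else 0) * ?v + c * ((if s = r then 1 else 0) + (if s = 0 then e r else 0))" .
    have "(P * T) $$ (r, s) = (\<Sum>k<n. ((if k = r then 1 else 0) + (if k = 0 then e r else 0)) *
        ((if k = s then c else 0) + (if k = 0 then q * ?v else 0)))"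
      unfolding P_def T_def by (rule mult_mat_entry[OF r s])
    also have "... = ((if r = s then c else 0) + (if r = 0 then q * ?v else 0)) + e r * ((if 0 = s then c else 0) + q * ?v)"
      by (subst row_sum_P[OF r n]) simp
    also have "... = q * (if Dm r then 1 else 0) * ?v + c * ((if s = r then 1 else 0) + (if s = 0 then e r else 0))"
      using D0 unfolding e_def by (auto simp: algebra_simps)
    finally show "(M * P) $$ (r, s) = (P * T) $$ (r, s)" using L by simp
  qed (auto simp: M_def P_def T_def)
  have "M = M * (P * Q)" using carr PQ by simp
  also have "... = (M * P) * Q" using carr by simp
  also have "... = P * T * Q" unfolding MP ..
  finally have "M = P * T * Q" .
  then have "similar_mat_wit M T P Q"
    unfolding similar_mat_wit_def Let_def using carr PQ QP by (auto simp: M_def)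
  then show ?thesis unfolding similar_mat_def by blast
qed

lemma count_diag:
  assumes d: "d > 0"
  shows "(\<Sum>k<d*d. if k \<noteq> 0 \<and> k div d = k mod d then (1::complex) else 0) = of_nat (d - 1)"
proof -
  let ?S = "{k \<in> {..<d*d}. k \<noteq> 0 \<and> k div d = k mod d}"
  have "(\<Sum>k<d*d. if k \<noteq> 0 \<and> k div d = k mod d then (1::complex) else 0) = (\<Sum>k\<in>?S. 1)"
    using sum.inter_filter[of "{..<d*d}" "\<lambda>_. (1::complex)" "\<lambda>k. k \<noteq> 0 \<and> k div d = k mod d"] by simp
  also have "... = of_nat (card ?S)" by simp
  also have "?S = (\<lambda>a. a*d+a) ` {1..<d}"
  proof
    show "?S \<subseteq> (\<lambda>a. a*d+a) ` {1..<d}"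
    proof
      fix k assume k: "k \<in> ?S"
      define a where "a = k div d"
      have k1: "k < d * d" "k \<noteq> 0" "k div d = k mod d" using k by auto
      have ka: "k = a*d + a"
        using div_mult_mod_eq[of k d] k1(3) unfolding a_def by simp
      have "a < d" unfolding a_def using k1(1) by (rule less_mult_imp_div_less)
      moreover have "a \<noteq> 0"
      proof
        assume "a = 0" then have "k = 0" using ka by simp
        then show False using k1(2) by simp
      qed
      ultimately have "a \<in> {1..<d}" by simp
      then show "k \<in> (\<lambda>a. a*d+a) ` {1..<d}" using ka by blast
    qed
    show "(\<lambda>a. a*d+a) ` {1..<d} \<subseteq> ?S"
    proof
      fix k assume "k \<in> (\<lambda>a. a*d+a) ` {1..<d}"
      then obtain a where a: "1 \<le> a" "a < d" and ka: "k = a*d+a" by auto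
      have lt: "a*d+a < d*d"
      proof -
        have "a*d+a < a*d + d" using a by simp
        also have "... = (a+1)*d" by simp
        also have "... \<le> d*d" using a by (intro mult_right_mono) auto
        finally show ?thesis .
      qed
      have "(a*d+a) div d = a" "(a*d+a) mod d = a" using a by auto
      moreover have "a*d+a \<noteq> 0" using a by simp
      ultimately show "k \<in> ?S" using lt ka by simp
    qed
  qed
  also have "card ((\<lambda>a. a*d+a) ` {1..<d}) = card {1..<d}"
  proof (rule card_image)
    show "inj_on (\<lambda>a. a*d+a) {1..<d}"
    proof (rule inj_onI)
      fix x y assume "x*d+x = y*d+y"
      then have h: "x*(d+1) = y*(d+1)" by (simp only: distrib_left mult_1_right)
      have "d + 1 \<noteq> 0" by simp
      from mult_right_cancel[OF this] h show "x = y" by blast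
    qed
  qed
  also have "card {1..<d} = d - 1" by simp
  finally show ?thesis .
qed

lemma vn_entropy_iso:
  assumes d: "d > 0"
  shows "vn_entropy (iso_state d p) = ent_term (p + (1 - p) / real d ^ 2) + (real d ^ 2 - 1) * ent_term ((1 - p) / real d ^ 2)"
proof -
  let ?n = "d*d"
  let ?Dm = "\<lambda>r::nat. r div d = r mod d"
  let ?q = "complex_of_real p / of_nat d" and ?c = "complex_of_real (1 - p) / of_nat (d^2)"
  let ?e = "\<lambda>r. if r \<noteq> 0 \<and> ?Dm r then (1::complex) else 0"
  let ?m = "\<Sum>k<?n. ?e k"
  let ?M = "mat ?n ?n (\<lambda>(r,s). ?q * (if ?Dm r \<and> ?Dm s then 1 else 0) + ?c * (if r = s then 1 else 0))"
  let ?T = "mat ?n ?n (\<lambda>(r,s). (if r = s then ?c else 0) + (if r = 0 then ?q * ((if ?Dm s then 1 else 0) + (if s = 0 then ?m else 0)) else 0))"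
  have n: "?n > 0" using d by simp
  have iso: "iso_state d p = ?M"
    unfolding iso_state_def by (intro arg_cong[where f = "mat ?n ?n"]) (auto simp: fun_eq_iff)
  have sim: "similar_mat ?M ?T"
    by (rule similar_rank1[OF n]) simp
  have m: "?m = of_nat (d - 1)" using count_diag[OF d] by simp
  have "vn_entropy (iso_state d p) = vn_entropy ?T"
    unfolding iso vn_entropy_def using char_poly_similar[OF sim] by simp
  also have "... = (\<Sum>i<?n. ent_term (Re (?T $$ (i,i))))"
    by (rule vn_entropy_upper) (auto simp: upper_triangular_def)
  also have "... = (\<Sum>i<?n. if i = 0 then ent_term (p + (1 - p) / real d ^ 2) else ent_term ((1 - p) / real d ^ 2))"
  proof (rule sum.cong[OF refl])
    fix i assume i: "i \<in> {..<?n}"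
    show "ent_term (Re (?T $$ (i,i))) = (if i = 0 then ent_term (p + (1 - p) / real d ^ 2) else ent_term ((1 - p) / real d ^ 2))"
    proof (cases "i = 0")
      case True
      have "?T $$ (i,i) = ?c + ?q * (1 + of_nat (d - 1))" using True i m by simp
      also have "?q * (1 + of_nat (d - 1)) = complex_of_real p" using d by (simp add: of_nat_diff)
      finally have "Re (?T $$ (i,i)) = p + (1 - p) / real d ^ 2" by (simp add: Re_divide power2_eq_square)
      then show ?thesis using True by simp
    next
      case False
      then have "Re (?T $$ (i,i)) = (1 - p) / real d ^ 2" using i by (simp add: Re_divide power2_eq_square)
      then show ?thesis using False by simp
    qed
  qed
  also have "... = ent_term (p + (1 - p) / real d ^ 2) + (real (d*d) - 1) * ent_term ((1 - p) / real d ^ 2)"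
    by (rule sum_if_unique[OF n]) auto
  finally show ?thesis by (simp add: power2_eq_square)
qed



definition xlnx :: "real \<Rightarrow> real" where "xlnx x = x * ln x"

lemma xlnx_deriv: "x > 0 \<Longrightarrow> (xlnx has_real_derivative (ln x + 1)) (at x)"
  unfolding xlnx_def by (auto intro!: derivative_eq_intros)

lemma xlnx_cont: "continuous_on {0..} xlnx"
proof (rule continuous_on_eq_continuous_within[THEN iffD2], intro ballI)
  fix x :: real assume x: "x \<in> {0..}"
  show "continuous (at x within {0..}) xlnx"
  proof (cases "x = 0")
    case True
    have "(xlnx \<longlongrightarrow> 0) (at_right 0)"
    proof -
      have l: "((\<lambda>x. ln (inverse x) / inverse x) \<longlongrightarrow> (0::real)) (at_right 0)"
        using filterlim_compose[OF ln_x_over_x_tendsto_0 filterlim_inverse_at_top_right] by simp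
      have "((\<lambda>x. - (ln (inverse x) / inverse x)) \<longlongrightarrow> - (0::real)) (at_right 0)"
        by (rule tendsto_minus[OF l])
      moreover have "\<forall>\<^sub>F x in at_right 0. - (ln (inverse x) / inverse x) = xlnx x"
        using eventually_at_right_less[of "0::real"]
        by eventually_elim (simp add: xlnx_def ln_inverse divide_inverse)
      ultimately show ?thesis using Lim_transform_eventually by fastforce
    qed
    then show ?thesis using True
      by (simp add: continuous_within at_within_Ici_at_right xlnx_def)
  next
    case False
    then have "x > 0" using x by simp
    then have "isCont xlnx x" using xlnx_deriv DERIV_isCont by blast
    then show ?thesis using continuous_at_imp_continuous_at_within by blast
  qed
qed

lemma xlnx_aff_deriv:
  assumes "a + b * p > 0"
  shows "((\<lambda>p. xlnx (a + b * p)) has_real_derivative (b * (ln (a + b * p) + 1))) (at p)"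
proof -
  have "((\<lambda>p. a + b * p) has_real_derivative b) (at p)"
    by (auto intro!: derivative_eq_intros)
  from DERIV_chain2[OF xlnx_deriv[OF assms] this] show ?thesis by (simp add: mult.commute)
qed

lemma xlnx_aff_cont:
  assumes "\<And>p. p \<in> S \<Longrightarrow> a + b * p \<ge> 0"
  shows "continuous_on S (\<lambda>p. xlnx (a + b * p))"
proof -
  have "continuous_on S (\<lambda>p. a + b * p)" by (intro continuous_intros)
  moreover have "(\<lambda>p. a + b * p) ` S \<subseteq> {0..}" using assms by auto
  ultimately show ?thesis
    using continuous_on_compose2[OF xlnx_cont] by blast
qed

definition GG :: "real \<Rightarrow> real \<Rightarrow> real" where
  "GG n p = (xlnx (1 + (n^2-1)*p) + (n^2-1) * xlnx (1-p)) / n^2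
     - 2 * (xlnx (1 + (n-1)*p) + (n-1) * xlnx (1-p)) / n"
definition GD :: "real \<Rightarrow> real \<Rightarrow> real" where
  "GD n p = (n^2-1)/n^2 * (ln (1 + (n^2-1)*p) - ln (1-p))
     - 2*(n-1)/n * (ln (1 + (n-1)*p) - ln (1-p))"
definition GDD :: "real \<Rightarrow> real \<Rightarrow> real" where
  "GDD n p = (n^2-1)/((1 + (n^2-1)*p)*(1-p)) - 2*(n-1)/((1 + (n-1)*p)*(1-p))"

lemma xlnx_chain[derivative_intros]:
  "(f has_real_derivative f') (at x) \<Longrightarrow> f x > 0 \<Longrightarrow>
   ((\<lambda>x. xlnx (f x)) has_real_derivative (f' * (ln (f x) + 1))) (at x)"
  using DERIV_chain2[OF xlnx_deriv] by (simp add: mult.commute)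

lemma pos_aux:
  fixes n p :: real
  assumes n: "n \<ge> 2" and p: "1 + (n^2-1)*p > 0"
  shows "1 + (n-1)*p > 0"
proof (cases "p \<ge> 0")
  case True then show ?thesis using n by (simp add: add_pos_nonneg)
next
  case False
  have "0 \<le> n*(n-1)" using n by simp
  then have "n - 1 \<le> n^2 - 1" by (simp add: power2_eq_square algebra_simps)
  then have "(n^2-1)*p \<le> (n-1)*p" using False by (intro mult_right_mono_neg) auto
  then show ?thesis using p by linarith
qed

lemma aff_deriv: "((\<lambda>p::real. a + b*p) has_real_derivative b) (at p)"
  by (auto intro!: derivative_eq_intros)

lemma GG_deriv:
  fixes n p :: real
  assumes n: "n \<ge> 2" and p: "1 + (n^2-1)*p > 0" "p < 1"
  shows "(GG n has_real_derivative GD n p) (at p)"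
proof -
  have q: "1 + (n-1)*p > 0" using pos_aux[OF n p(1)] .
  have n0: "n \<noteq> 0" using n by simp
  have dA: "((\<lambda>p. xlnx (1 + (n^2-1)*p)) has_real_derivative (n^2-1)*(ln (1 + (n^2-1)*p)+1)) (at p)"
    using xlnx_chain[OF aff_deriv[of 1 "n^2-1" p]] p by simp
  have dC: "((\<lambda>p. xlnx (1 + (n-1)*p)) has_real_derivative (n-1)*(ln (1 + (n-1)*p)+1)) (at p)"
    using xlnx_chain[OF aff_deriv[of 1 "n-1" p]] q by simp
  have dB: "((\<lambda>p. xlnx (1 - p)) has_real_derivative (-1)*(ln (1 - p)+1)) (at p)"
    using xlnx_chain[OF aff_deriv[of 1 "-1" p]] p by simp
  have "(GG n has_real_derivative
     ((n^2-1)*(ln (1 + (n^2-1)*p)+1) + (n^2-1) * ((-1)*(ln (1 - p)+1))) / n^2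
     - 2 * ((n-1)*(ln (1 + (n-1)*p)+1) + (n-1) * ((-1)*(ln (1 - p)+1))) / n) (at p)"
    unfolding GG_def
    by (intro DERIV_diff DERIV_cdivide DERIV_add dA dB dC DERIV_cmult)
  then show ?thesis
    apply (rule DERIV_cong)
    unfolding GD_def using n0 by (simp add: field_simps)
qed

lemma frac_aux:
  fixes m u v :: real
  assumes "u > 0" "v > 0" "m \<noteq> 0" "(m-1)*v + u = m"
  shows "(m-1)/m * ((m-1)/u - (-1)/v) = (m-1)/(u*v)"
proof -
  have "(m-1)/u - (-1)/v = ((m-1)*v + u)/(u*v)" using assms by (simp add: field_simps)
  also have "... = m/(u*v)" using assms(4) by simp
  finally show ?thesis using assms by simp
qed

lemma GD_deriv:
  fixes n p :: real
  assumes n: "n \<ge> 2" and p: "1 + (n^2-1)*p > 0" "p < 1"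
  shows "(GD n has_real_derivative GDD n p) (at p)"
proof -
  have q: "1 + (n-1)*p > 0" using pos_aux[OF n p(1)] .
  have n0: "n \<noteq> 0" using n by simp
  have dA: "((\<lambda>p. ln (1 + (n^2-1)*p)) has_real_derivative (n^2-1) / (1 + (n^2-1)*p)) (at p)"
    using DERIV_ln_divide[OF p(1)] DERIV_chain2 aff_deriv[of 1 "n^2-1" p]
    by (auto intro!: derivative_eq_intros simp: p)
  have dC: "((\<lambda>p. ln (1 + (n-1)*p)) has_real_derivative (n-1) / (1 + (n-1)*p)) (at p)"
    by (auto intro!: derivative_eq_intros simp: q)
  have dB: "((\<lambda>p. ln (1 - p)) has_real_derivative (-1) / (1 - p)) (at p)"
    by (auto intro!: derivative_eq_intros simp: p)
  have "(GD n has_real_derivative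
     (n^2-1)/n^2 * ((n^2-1) / (1 + (n^2-1)*p) - (-1) / (1-p))
     - 2*(n-1)/n * ((n-1) / (1 + (n-1)*p) - (-1) / (1-p))) (at p)"
    unfolding GD_def
    by (intro DERIV_diff DERIV_cmult dA dB dC)
  moreover
  have "(n^2-1)/n^2 * ((n^2-1) / (1 + (n^2-1)*p) - (-1) / (1-p))
     - 2*(n-1)/n * ((n-1) / (1 + (n-1)*p) - (-1) / (1-p)) = GDD n p"
  proof -
    have v: "1 - p > 0" using p by simp
    have e1: "(n^2-1)/n^2 * ((n^2-1) / (1 + (n^2-1)*p) - (-1) / (1-p)) = (n^2-1)/((1 + (n^2-1)*p)*(1-p))"
      using frac_aux[OF p(1) v, of "n^2"] n0 by (simp add: algebra_simps)
    have e2: "2*(n-1)/n * ((n-1) / (1 + (n-1)*p) - (-1) / (1-p)) = 2*(n-1)/((1 + (n-1)*p)*(1-p))"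
    proof -
      have e2': "(n-1)/n * ((n-1) / (1 + (n-1)*p) - (-1) / (1-p)) = (n-1)/((1 + (n-1)*p)*(1-p))"
        by (rule frac_aux[OF q v]) (use n0 in \<open>simp_all add: algebra_simps\<close>)
      have "2*(n-1)/n * ((n-1) / (1 + (n-1)*p) - (-1) / (1-p)) = 2 * ((n-1)/n * ((n-1) / (1 + (n-1)*p) - (-1) / (1-p)))"
        by simp
      then show ?thesis unfolding e2' by simp
    qed
    show ?thesis unfolding GDD_def e1 e2 ..
  qed
  ultimately show ?thesis by simp
qed

lemma GDD_eq:
  fixes n p :: real
  assumes n: "n \<ge> 2" and p: "1 + (n^2-1)*p > 0" "p < 1"
  shows "GDD n p = (n-1)^2 * (1 - (n+1)*p) / ((1 + (n^2-1)*p) * (1-p) * (1 + (n-1)*p))"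
proof -
  have q: "1 + (n-1)*p > 0" using pos_aux[OF n p(1)] .
  have v: "1 - p > 0" using p by simp
  have gen: "A/(u*v) - B/(w*v) = (A*w - B*u)/(u*v*w)" if "u > 0" "v > 0" "w > 0" for A B u v w :: real
    using that by (simp add: field_simps)
  have "GDD n p = ((n^2-1)*(1 + (n-1)*p) - 2*(n-1)*(1 + (n^2-1)*p)) / ((1 + (n^2-1)*p) * (1-p) * (1 + (n-1)*p))"
    unfolding GDD_def by (rule gen[OF p(1) v q])
  also have "(n^2-1)*(1 + (n-1)*p) - 2*(n-1)*(1 + (n^2-1)*p) = (n-1)^2 * (1 - (n+1)*p)"
    by (simp add: power2_eq_square algebra_simps)
  finally show ?thesis .
qed

lemma GDD_sign:
  fixes n p :: real
  assumes n: "n \<ge> 2" and p: "1 + (n^2-1)*p > 0" "p < 1"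
  shows "p \<le> 1/(n+1) \<Longrightarrow> GDD n p \<ge> 0" and "p \<ge> 1/(n+1) \<Longrightarrow> GDD n p \<le> 0"
proof -
  have q: "1 + (n-1)*p > 0" using pos_aux[OF n p(1)] .
  have v: "1 - p > 0" using p by simp
  have D: "(1 + (n^2-1)*p) * (1-p) * (1 + (n-1)*p) > 0" using p(1) q v by simp
  have n1: "n + 1 > 0" using n by simp
  show "p \<le> 1/(n+1) \<Longrightarrow> GDD n p \<ge> 0"
  proof -
    assume "p \<le> 1/(n+1)"
    then have "(n+1)*p \<le> 1" using n1 by (simp add: field_simps)
    then show ?thesis unfolding GDD_eq[OF n p] using D by (intro divide_nonneg_pos) auto
  qed
  show "p \<ge> 1/(n+1) \<Longrightarrow> GDD n p \<le> 0"
  proof -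
    assume "p \<ge> 1/(n+1)"
    then have "(n+1)*p \<ge> 1" using n1 by (simp add: field_simps)
    then have "(n-1)^2 * (1 - (n+1)*p) \<le> 0" by (intro mult_nonneg_nonpos) auto
    then show ?thesis unfolding GDD_eq[OF n p] using D by (intro divide_nonpos_pos) auto
  qed
qed

lemma p0_iff:
  fixes n p :: real
  assumes n: "n \<ge> 2"
  shows "(-1/(n^2-1) < p) = (1 + (n^2-1)*p > 0)" and "(-1/(n^2-1) \<le> p) = (1 + (n^2-1)*p \<ge> 0)"
proof -
  have "n^2 \<ge> 2^2" using n by (intro power_mono) auto
  then have N: "n^2 - 1 > 0" by simp
  show "(-1/(n^2-1) < p) = (1 + (n^2-1)*p > 0)" using N by (simp add: field_simps)
  show "(-1/(n^2-1) \<le> p) = (1 + (n^2-1)*p \<ge> 0)" using N by (simp add: field_simps)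
qed

lemma GG_cont:
  fixes n :: real
  assumes n: "n \<ge> 2"
  shows "continuous_on {-1/(n^2-1)..1} (GG n)"
proof -
  let ?S = "{-1/(n^2-1)..1}"
  have a: "continuous_on ?S (\<lambda>p. xlnx (1 + (n^2-1)*p))"
    by (rule xlnx_aff_cont) (use p0_iff(2)[OF n] in auto)
  have b: "continuous_on ?S (\<lambda>p. xlnx (1 + (n-1)*p))"
  proof (rule xlnx_aff_cont)
    fix p assume "p \<in> ?S"
    then have p: "1 + (n^2-1)*p \<ge> 0" using p0_iff(2)[OF n] by auto
    show "1 + (n-1)*p \<ge> 0"
    proof (cases "p \<ge> 0")
      case True then show ?thesis using n by simp
    next
      case False
      have "0 \<le> n*(n-1)" using n by simp
      then have "n - 1 \<le> n^2 - 1" by (simp add: power2_eq_square algebra_simps)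
      then have "(n^2-1)*p \<le> (n-1)*p" using False by (intro mult_right_mono_neg) auto
      then show ?thesis using p by linarith
    qed
  qed
  have c: "continuous_on ?S (\<lambda>p. xlnx (1 - p))"
    using xlnx_aff_cont[of ?S 1 "-1"] by auto
  show ?thesis unfolding GG_def
    by (intro continuous_intros a b c) (use n in auto)
qed



lemma GG_0: "GG n 0 = 0" and GD_0: "GD n 0 = 0"
  unfolding GG_def GD_def xlnx_def by simp_all

lemma GG_1: fixes n :: real assumes "n \<ge> 2" shows "GG n 1 = 0"
proof -
  have "GG n 1 = n^2 * ln (n^2) / n^2 - 2 * (n * ln n) / n"
    unfolding GG_def xlnx_def by simp
  also have "... = 0" using assms by (simp add: ln_realpow)
  finally show ?thesis .
qed

lemma GD_mono_left:
  fixes n x y :: real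
  assumes n: "n \<ge> 2" and x: "1 + (n^2-1)*x > 0" and xy: "x \<le> y" and y: "y \<le> 1/(n+1)"
  shows "GD n x \<le> GD n y"
proof -
  have n1: "1/(n+1) < 1" using n by (simp add: field_simps)
  have dom: "1 + (n^2-1)*z > 0" "z < 1" if "x \<le> z" "z \<le> y" for z
  proof -
    have "n^2 \<ge> 2^2" using n by (intro power_mono) auto
    then have "(n^2-1)*x \<le> (n^2-1)*z" using that by (intro mult_left_mono) auto
    then show "1 + (n^2-1)*z > 0" using x by linarith
    show "z < 1" using that y n1 by linarith
  qed
  show ?thesis
  proof (rule DERIV_nonneg_imp_increasing_open[OF xy])
    fix z assume "x < z" "z < y"
    then show "\<exists>l. (GD n has_real_derivative l) (at z) \<and> l \<ge> 0"
      using GD_deriv[OF n dom] GDD_sign(1)[OF n dom] y by (intro exI[of _ "GDD n z"]) auto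
  next
    show "continuous_on {x..y} (GD n)"
      by (rule DERIV_continuous_on[where D="GDD n"]) (rule has_field_derivative_at_within, rule GD_deriv[OF n dom], auto)
  qed
qed

lemma GD_mono_right:
  fixes n x y :: real
  assumes n: "n \<ge> 2" and x: "1/(n+1) \<le> x" and xy: "x \<le> y" and y: "y < 1"
  shows "GD n y \<le> GD n x"
proof -
  have dom: "1 + (n^2-1)*z > 0" "z < 1" if "x \<le> z" "z \<le> y" for z
  proof -
    have "n^2 \<ge> 2^2" using n by (intro power_mono) auto
    moreover have "1/(n+1) > 0" using n by simp
    then have "z > 0" using that x by linarith
    ultimately have "(n^2-1)*z \<ge> 0" by simp
    then show "1 + (n^2-1)*z > 0" by linarith
    show "z < 1" using that y by linarith
  qed
  show ?thesis
  proof (rule DERIV_nonpos_imp_decreasing_open[OF xy])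
    fix z assume "x < z" "z < y"
    then show "\<exists>l. (GD n has_real_derivative l) (at z) \<and> l \<le> 0"
      using GD_deriv[OF n dom] GDD_sign(2)[OF n dom] x by (intro exI[of _ "GDD n z"]) auto
  next
    show "continuous_on {x..y} (GD n)"
      by (rule DERIV_continuous_on[where D="GDD n"]) (rule has_field_derivative_at_within, rule GD_deriv[OF n dom], auto)
  qed
qed

lemma GG_nonneg_left:
  fixes n p :: real
  assumes n: "n \<ge> 2" and p: "-1/(n^2-1) \<le> p" "p \<le> 1/(n+1)"
  shows "GG n p \<ge> 0"
proof -
  have n1: "1/(n+1) < 1" "0 < 1/(n+1)" using n by (simp_all add: field_simps)
  have N: "n^2 - 1 > 0" using power_mono[of 2 n 2] n by simp
  have cont: "continuous_on {a..b} (GG n)" if "-1/(n^2-1) \<le> a" "b \<le> 1" for a b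
  proof (rule continuous_on_subset[OF GG_cont[OF n]])
    show "{a..b} \<subseteq> {-1/(n^2-1)..1}" using that by auto
  qed
  show ?thesis
  proof (cases "p \<le> 0")
    case True
    have "GG n 0 \<le> GG n p"
    proof (rule DERIV_nonpos_imp_decreasing_open[OF True])
      fix z assume z: "p < z" "z < 0"
      have "-1/(n^2-1) < z" using z p(1) by linarith
      then have dz1: "1 + (n^2-1)*z > 0" using p0_iff(1)[OF n] by blast
      have dz2: "z < 1" using z by simp
      have "GD n z \<le> GD n 0" by (rule GD_mono_left[OF n dz1]) (use z n1 in auto)
      then show "\<exists>l. (GG n has_real_derivative l) (at z) \<and> l \<le> 0"
        using GG_deriv[OF n dz1 dz2] GD_0[of n] by auto
    next
      show "continuous_on {p..0} (GG n)" by (rule cont) (use p in auto)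
    qed
    then show ?thesis using GG_0 by simp
  next
    case False
    have "GG n 0 \<le> GG n p"
    proof (rule DERIV_nonneg_imp_increasing_open[of 0 p])
      show "0 \<le> p" using False by simp
      fix z assume z: "0 < z" "z < p"
      have "(n^2-1)*z \<ge> 0" using N z by simp
      then have dz1: "1 + (n^2-1)*z > 0" by linarith
      have dz2: "z < 1" using z p n1 by linarith
      have "GD n 0 \<le> GD n z" by (rule GD_mono_left[OF n]) (use z p n1 in auto)
      then show "\<exists>l. (GG n has_real_derivative l) (at z) \<and> l \<ge> 0"
        using GG_deriv[OF n dz1 dz2] GD_0[of n] by auto
    next
      have "-1/(n^2-1) \<le> 0" using N by (simp add: divide_nonpos_pos)
      then show "continuous_on {0..p} (GG n)" by (rule cont) (use p(2) n1(1) in linarith)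
    qed
    then show ?thesis using GG_0 by simp
  qed
qed

lemma GG_nonneg:
  fixes n p :: real
  assumes n: "n \<ge> 2" and p: "-1/(n^2-1) \<le> p" "p \<le> 1"
  shows "GG n p \<ge> 0"
proof (cases "p \<le> 1/(n+1)")
  case True then show ?thesis using GG_nonneg_left[OF n p(1)] by simp
next
  case False
  let ?b = "1/(n+1)"
  have n1: "?b < 1" "0 < ?b" using n by (simp_all add: field_simps)
  have N: "n^2 - 1 > 0" using power_mono[of 2 n 2] n by simp
  have "-1/(n^2-1) \<le> 0" using N by (simp add: divide_nonpos_pos)
  then have b0: "-1/(n^2-1) \<le> ?b" using n1 by linarith
  have Gb: "GG n ?b \<ge> 0" by (rule GG_nonneg_left[OF n b0]) simp
  have cont: "continuous_on {a..b} (GG n)" if "-1/(n^2-1) \<le> a" "b \<le> 1" for a b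
    using continuous_on_subset[OF GG_cont[OF n]] that by auto
  have dom: "1 + (n^2-1)*z > 0" if "?b \<le> z" for z
  proof -
    have "n^2 \<ge> 2^2" using n by (intro power_mono) auto
    moreover have "z > 0" using that n1 by linarith
    ultimately have "(n^2-1)*z \<ge> 0" by simp
    then show "1 + (n^2-1)*z > 0" by linarith
  qed
  show ?thesis
  proof (cases "p = 1")
    case True then show ?thesis using GG_1[OF n] by simp
  next
    case p1: False
    show ?thesis
    proof (rule ccontr)
      assume neg: "\<not> ?thesis"
      have bp: "?b < p" using False by simp
      have "\<exists>l z. ?b < z \<and> z < p \<and> DERIV (GG n) z :> l \<and> GG n p - GG n ?b = (p - ?b) * l"
      proof (rule MVT[OF bp])
        show "continuous_on {?b..p} (GG n)" by (rule cont) (use b0 p in auto)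
        fix x assume x: "?b < x" "x < p"
        then have "x < 1" using p by simp
        then show "GG n differentiable (at x)"
          using GG_deriv[OF n dom, of x] x real_differentiable_def by auto
      qed
      then obtain l z where z: "?b < z" "z < p" "(GG n has_real_derivative l) (at z)"
          "GG n p - GG n ?b = (p - ?b) * l" by blast
      have "z < 1" using z p by simp
      then have "l = GD n z" using z GG_deriv[OF n dom, of z] DERIV_unique by auto
      have "(p - ?b) * l < 0" using z(4) neg Gb by linarith
      then have lneg: "GD n z < 0" using bp `l = GD n z` by (simp add: mult_less_0_iff)
      have "GG n 1 \<le> GG n p"
      proof (rule DERIV_nonpos_imp_decreasing_open[of p 1])
        show "p \<le> 1" using p by simp
        fix y assume y: "p < y" "y < 1"
        have "GD n y \<le> GD n z" by (rule GD_mono_right[OF n]) (use z y in auto)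
        then show "\<exists>l. (GG n has_real_derivative l) (at y) \<and> l \<le> 0"
          using GG_deriv[OF n dom, of y] y z lneg by auto
      next
        show "continuous_on {p..1} (GG n)" by (rule cont) (use bp b0 in auto)
      qed
      then show False using GG_1[OF n] neg by simp
    qed
  qed
qed



lemma ent_ln: "ent_term x * ln 2 = - xlnx x"
  unfolding ent_term_def xlnx_def log_def by auto

lemma xlnx_div:
  assumes "y \<ge> 0" "N > 0"
  shows "xlnx (y / N) = xlnx y / N - (y / N) * ln N"
proof (cases "y = 0")
  case True then show ?thesis unfolding xlnx_def by simp
next
  case False
  then have "y > 0" using assms by simp
  then show ?thesis unfolding xlnx_def using assms by (simp add: ln_div algebra_simps)
qed

lemma ent_div:
  assumes "y \<ge> 0" "N > 0"
  shows "ln 2 * ent_term (y / N) = - xlnx y / N + (y / N) * ln N"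
  using ent_ln[of "y/N"] xlnx_div[OF assms] by (simp add: algebra_simps)

lemma key_ineq:
  fixes r p :: real
  assumes r: "r \<ge> 2" and p: "- 1 / (r ^ 2 - 1) \<le> p" "p \<le> 1"
  shows "2 * r * ent_term (1 / r) - (ent_term (p + (1 - p) / r ^ 2) + (r ^ 2 - 1) * ent_term ((1 - p) / r ^ 2))
    \<ge> 2 * (2 * r * ent_term (1 / r) - r * (ent_term (p / r + (1 - p) / r ^ 2) + (r - 1) * ent_term ((1 - p) / r ^ 2)))"
proof -
  define u where "u = 1 + (r^2 - 1) * p"
  define v where "v = 1 - p"
  define w where "w = 1 + (r - 1) * p"
  have r0: "r > 0" using r by simp
  have N: "r^2 > 0" using r0 by simp
  have r00: "r \<ge> 0" using r0 by simp
  have u0: "u \<ge> 0" unfolding u_def using p0_iff(2)[OF r] p(1) by simp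
  have v0: "v \<ge> 0" unfolding v_def using p by simp
  have w0: "w \<ge> 0"
  proof (cases "p \<ge> 0")
    case True then show ?thesis unfolding w_def using r by simp
  next
    case False
    have "0 \<le> r*(r-1)" using r by simp
    then have "r - 1 \<le> r^2 - 1" by (simp add: power2_eq_square algebra_simps)
    then have "(r^2-1)*p \<le> (r-1)*p" using False by (intro mult_right_mono_neg) auto
    then show ?thesis using u0 unfolding u_def w_def by linarith
  qed
  have e1: "1 / r = r / r^2" using r0 by (simp add: power2_eq_square)
  have e2: "p + (1 - p) / r ^ 2 = u / r^2" unfolding u_def using r0 by (simp add: field_simps power2_eq_square)
  have e3: "p / r + (1 - p) / r ^ 2 = w / r^2" unfolding w_def using r0 by (simp add: field_simps power2_eq_square)
  have e4: "(1 - p) / r ^ 2 = v / r^2" unfolding v_def ..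
  have lnN: "ln (r^2) = 2 * ln r" using r0 by (simp add: ln_realpow)
  have xr: "xlnx r = r * ln r" unfolding xlnx_def ..
  have "ln 2 * ((2 * r * ent_term (1 / r) - (ent_term (p + (1 - p) / r ^ 2) + (r ^ 2 - 1) * ent_term ((1 - p) / r ^ 2)))
    - 2 * (2 * r * ent_term (1 / r) - r * (ent_term (p / r + (1 - p) / r ^ 2) + (r - 1) * ent_term ((1 - p) / r ^ 2))))
    = 2 * r * (ln 2 * ent_term (r / r^2)) - (ln 2 * ent_term (u / r^2) + (r ^ 2 - 1) * (ln 2 * ent_term (v / r^2)))
    - 2 * (2 * r * (ln 2 * ent_term (r / r^2)) - r * (ln 2 * ent_term (w / r^2) + (r - 1) * (ln 2 * ent_term (v / r^2))))"
    (is "ln 2 * ?D = _")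
    unfolding e2 e3 unfolding e4 e1 by (simp add: algebra_simps)
  also have "... = GG r p"
    unfolding ent_div[OF u0 N] ent_div[OF v0 N] ent_div[OF w0 N] ent_div[OF r00 N] lnN xr
    unfolding GG_def u_def[symmetric] v_def[symmetric] w_def[symmetric]
    using r0 by (simp add: field_simps power2_eq_square) (simp add: algebra_simps u_def v_def w_def power2_eq_square)
  finally have "ln 2 * ?D = GG r p" .
  moreover have "GG r p \<ge> 0" by (rule GG_nonneg[OF r p])
  ultimately have "ln 2 * ?D \<ge> 0" by simp
  then have "?D \<ge> 0" by (simp add: zero_le_mult_iff)
  then show ?thesis by simp
qed

lemma ent_inv_d: assumes "d > 0" shows "real d * ent_term (1 / real d) = log 2 (real d)"
  unfolding ent_term_def using assms by (simp add: log_divide)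

lemma ent_inv_d2: assumes "d > 0" shows "real d * (real d * ent_term (1 / real d ^ 2)) = 2 * log 2 (real d)"
  unfolding ent_term_def using assms by (simp add: log_divide log_mult power2_eq_square)

theorem mainTheorem6:
  fixes d :: nat and p :: real
  assumes "prime d" and "d \<ge> 3"
    and "- 1 / (real d ^ 2 - 1) \<le> p" and "p \<le> 1"
  shows "quantum_MI d (iso_state d p) \<ge> (\<Sum>i\<in>{1..d+1}. classical_MI d (iso_state d p) i)
    \<and> (\<Sum>i\<in>{1..d+1}. classical_MI d (iso_state d p) i)
        \<ge> Min {(\<Sum>i\<in>S. classical_MI d (iso_state d p) i) | S. S \<subseteq> {1..d+1} \<and> card S = d}"
proof -
  let ?f = "classical_MI d (iso_state d p)"
  have d0: "d > 0" and d2: "d > 2" using assms by auto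
  have r2: "real d \<ge> 2" using assms by simp
  have z: "?f i = 0" if "i \<in> {3..d+1}" for i
  proof -
    have "?f i = 2 * real d * ent_term (1 / d) - d * (d * ent_term (1 / real d ^ 2))"
      using that by (intro cmi_3[OF assms(1) d2]) auto
    also have "... = 0" using ent_inv_d[OF d0] ent_inv_d2[OF d0] by simp
    finally show ?thesis .
  qed
  have split: "{1..d+1} = insert 1 (insert 2 {3..d+1})" using d2 by auto
  have sum_all: "(\<Sum>i\<in>{1..d+1}. ?f i) = ?f 1 + ?f 2"
    unfolding split using z by simp
  have Q: "quantum_MI d (iso_state d p) = 2 * real d * ent_term (1 / real d) - (ent_term (p + (1 - p) / real d ^ 2) + (real d ^ 2 - 1) * ent_term ((1 - p) / real d ^ 2))"
    unfolding quantum_MI_def ptrace_A_iso[OF d0] ptrace_B_iso[OF d0] vn_entropy_scalar vn_entropy_iso[OF d0]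
    by simp
  have part1: "quantum_MI d (iso_state d p) \<ge> (\<Sum>i\<in>{1..d+1}. ?f i)"
    unfolding sum_all Q cmi_1[OF d0] cmi_2[OF d0]
    using key_ineq[OF r2 assms(3,4)] by simp
  let ?S0 = "{1..d+1} - {3}"
  have S0: "?S0 \<subseteq> {1..d+1}" "card ?S0 = d" using d2 by auto
  have sumS0: "(\<Sum>i\<in>?S0. ?f i) = (\<Sum>i\<in>{1..d+1}. ?f i)"
  proof -
    have "(\<Sum>i\<in>{1..d+1}. ?f i) = ?f 3 + (\<Sum>i\<in>?S0. ?f i)"
      using d2 by (subst sum.remove[of _ 3]) auto
    then show ?thesis using z[of 3] d2 by simp
  qed
  have fin: "finite {(\<Sum>i\<in>S. ?f i) | S. S \<subseteq> {1..d+1} \<and> card S = d}"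
  proof -
    have "{(\<Sum>i\<in>S. ?f i) | S. S \<subseteq> {1..d+1} \<and> card S = d} \<subseteq> (\<lambda>S. \<Sum>i\<in>S. ?f i) ` Pow {1..d+1}"
      by auto
    then show ?thesis by (rule finite_subset) simp
  qed
  have "Min {(\<Sum>i\<in>S. ?f i) | S. S \<subseteq> {1..d+1} \<and> card S = d} \<le> (\<Sum>i\<in>?S0. ?f i)"
    by (rule Min_le[OF fin]) (use S0 in blast)
  then have part2: "Min {(\<Sum>i\<in>S. ?f i) | S. S \<subseteq> {1..d+1} \<and> card S = d} \<le> (\<Sum>i\<in>{1..d+1}. ?f i)"
    using sumS0 by simp
  show ?thesis using part1 part2 by simp
qed

end
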